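(* The standard dual functor on $\mathrm{Herm}(\mathrm{sVect})$ maps $\mathrm{sHilb}\subseteq\mathrm{Herm}(\mathrm{sVect})$ into $\mathrm{sHilb}_{odd\text{-}neg}$, the full subcategory of super Hermitian vector spaces whose even part is positive definite and whose odd part is negative definite.
   Context: $\mathrm{sVect}$: finite-dimensional complex $\mathbb{Z}/2$-graded vector spaces with even linear maps, Koszul braiding, dual $V^*$ = graded space of linear functionals with $T^*(f)=f\circ T$. Anti-involution $dV=\overline{V}^*$ (identified with $\overline{V^*}$ via $\bar f(\bar v)=\overline{f(v)}$), monoidal structure $\chi(\bar f\otimes\bar g)(\bar v\otimes\bar w)=(-1)^{|g||v|}\overline{f(v)g(w)}$, $\eta_V(v)=\Phi_v$, $\Phi_v(f)=(-1)^{|f||v|}f(v)$. $\mathrm{Herm}(\mathrm{sVect})$: pairs $(V,\langle\cdot,\cdot\rangle)$ with nondegenerate sesquilinear form, $V_0\perp V_1$, $\langle v,w\rangle=(-1)^{|v||w|}\overline{\langle w,v\rangle}$; morphisms even linear maps. $\mathrm{sHilb}$: those with $\langle v,v\rangle>0$ for nonzero even $v$ and $\langle v,v\rangle/i>0$ for nonzero odd $v$; $\mathrm{sHilb}_{odd\text{-}neg}$: those with $\langle v,v\rangle>0$ for nonzero even $v$ and $\langle v,v\rangle/i<0$ for nonzero odd $v$. The standard dual functor sends $(V,h)$ (with $h\colon V\to dV$ the map corresponding to the form) to $V^*$ with the dual Hermitian pairing $V^*\xrightarrow{(h^* )^{-1}}(dV)^*\cong d(V^* )$, where the last isomorphism is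 the canonical uniqueness-of-duals isomorphism, and a morphism $T$ to $T^*$. *)

theory Defs
  imports "HOL-Analysis.Analysis"
begin

text \<open>
  A finite-dimensional complex super vector space is modelled by the
  underlying space complex^'n (every finite-dimensional complex vector space is
  isomorphic to one of these; 'n is an arbitrary finite index type) together with an
  arbitrary grading by two complementary subspaces V0 (even part) and V1 (odd part).
  Sesquilinear forms are linear in the first and antilinear in the second argument;
  the map h : V -> dV corresponding to a form is  h(v)(bar w) = B v w.
  Elements of dV = conj(V)^* are represented as antilinear functionals phi on V
  (phi w = value at bar w); elements of d(V^*) = conj(V^*)^* as antilinear functionals
  Theta on V^* (Theta f = value at bar f); elements of (dV)^* as linear functionals
  on dV.  All such representing functions are required to vanish outside their
  domain, so that they are uniquely determined.
\<close>

type_synonym 'n cvec = "complex ^ 'n"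

definition is_subsp :: "'a set \<Rightarrow> ('a \<Rightarrow> 'a \<Rightarrow> 'a) \<Rightarrow> (complex \<Rightarrow> 'a \<Rightarrow> 'a) \<Rightarrow> 'a \<Rightarrow> 'a set \<Rightarrow> bool" where
  "is_subsp S add sc z W \<longleftrightarrow> W \<subseteq> S \<and> z \<in> W \<and> (\<forall>x\<in>W. \<forall>y\<in>W. add x y \<in> W) \<and> (\<forall>c. \<forall>x\<in>W. sc c x \<in> W)"

definition super_herm ::
  "'a set \<Rightarrow> ('a \<Rightarrow> 'a \<Rightarrow> 'a) \<Rightarrow> (complex \<Rightarrow> 'a \<Rightarrow> 'a) \<Rightarrow> 'a \<Rightarrow> 'a set \<Rightarrow> 'a set \<Rightarrow> ('a \<Rightarrow> 'a \<Rightarrow> complex) \<Rightarrow> bool" where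
  "super_herm S add sc z V0 V1 B \<longleftrightarrow>
     is_subsp S add sc z V0 \<and> is_subsp S add sc z V1 \<and> V0 \<inter> V1 = {z} \<and>
     (\<forall>x\<in>S. \<exists>a\<in>V0. \<exists>b\<in>V1. x = add a b) \<and>
     (\<forall>x\<in>S. \<forall>y\<in>S. \<forall>w\<in>S. B (add x y) w = B x w + B y w \<and> B w (add x y) = B w x + B w y) \<and>
     (\<forall>c. \<forall>x\<in>S. \<forall>w\<in>S. B (sc c x) w = c * B x w \<and> B w (sc c x) = cnj c * B w x) \<and>
     (\<forall>x\<in>V0. \<forall>y\<in>V1. B x y = 0 \<and> B y x = 0) \<and>
     (\<forall>x\<in>V0. \<forall>y\<in>V0. B x y = cnj (B y x)) \<and>
     (\<forall>x\<in>V1. \<forall>y\<in>V1. B x y = - cnj (B y x)) \<and>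
     (\<forall>x\<in>S. (\<forall>y\<in>S. B x y = 0) \<longrightarrow> x = z)"

definition pos_real :: "complex \<Rightarrow> bool" where
  "pos_real c \<longleftrightarrow> c \<in> \<real> \<and> 0 < Re c"

definition neg_real :: "complex \<Rightarrow> bool" where
  "neg_real c \<longleftrightarrow> c \<in> \<real> \<and> Re c < 0"

definition sHilb_obj ::
  "'a set \<Rightarrow> ('a \<Rightarrow> 'a \<Rightarrow> 'a) \<Rightarrow> (complex \<Rightarrow> 'a \<Rightarrow> 'a) \<Rightarrow> 'a \<Rightarrow> 'a set \<Rightarrow> 'a set \<Rightarrow> ('a \<Rightarrow> 'a \<Rightarrow> complex) \<Rightarrow> bool" where
  "sHilb_obj S add sc z V0 V1 B \<longleftrightarrow> super_herm S add sc z V0 V1 B \<and>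
     (\<forall>v\<in>V0. v \<noteq> z \<longrightarrow> pos_real (B v v)) \<and>
     (\<forall>v\<in>V1. v \<noteq> z \<longrightarrow> pos_real (B v v / \<i>))"

definition sHilb_oddneg_obj ::
  "'a set \<Rightarrow> ('a \<Rightarrow> 'a \<Rightarrow> 'a) \<Rightarrow> (complex \<Rightarrow> 'a \<Rightarrow> 'a) \<Rightarrow> 'a \<Rightarrow> 'a set \<Rightarrow> 'a set \<Rightarrow> ('a \<Rightarrow> 'a \<Rightarrow> complex) \<Rightarrow> bool" where
  "sHilb_oddneg_obj S add sc z V0 V1 B \<longleftrightarrow> super_herm S add sc z V0 V1 B \<and>
     (\<forall>v\<in>V0. v \<noteq> z \<longrightarrow> pos_real (B v v)) \<and>
     (\<forall>v\<in>V1. v \<noteq> z \<longrightarrow> neg_real (B v v / \<i>))"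

definition sHilbV :: "'n::finite cvec set \<Rightarrow> 'n cvec set \<Rightarrow> ('n cvec \<Rightarrow> 'n cvec \<Rightarrow> complex) \<Rightarrow> bool" where
  "sHilbV V0 V1 B \<longleftrightarrow> sHilb_obj UNIV (+) (\<lambda>c x. c *s x) 0 V0 V1 B"

definition parproj :: "'n::finite cvec set \<Rightarrow> 'n cvec set \<Rightarrow> nat \<Rightarrow> 'n cvec \<Rightarrow> 'n cvec" where
  "parproj V0 V1 q v = (if q = 0 then (THE a. a \<in> V0 \<and> v - a \<in> V1) else (THE b. b \<in> V1 \<and> v - b \<in> V0))"

definition koszul :: "nat \<Rightarrow> nat \<Rightarrow> complex" where
  "koszul p q = (-1) ^ (p * q)"

definition clin :: "('n::finite cvec \<Rightarrow> complex) \<Rightarrow> bool" where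
  "clin f \<longleftrightarrow> (\<forall>x y. f (x + y) = f x + f y) \<and> (\<forall>c x. f (c *s x) = c * f x)"

definition antilin :: "('n::finite cvec \<Rightarrow> complex) \<Rightarrow> bool" where
  "antilin f \<longleftrightarrow> (\<forall>x y. f (x + y) = f x + f y) \<and> (\<forall>c x. f (c *s x) = cnj c * f x)"

definition fadd :: "('a \<Rightarrow> complex) \<Rightarrow> ('a \<Rightarrow> complex) \<Rightarrow> 'a \<Rightarrow> complex" where
  "fadd f g = (\<lambda>x. f x + g x)"

definition fsc :: "complex \<Rightarrow> ('a \<Rightarrow> complex) \<Rightarrow> 'a \<Rightarrow> complex" where
  "fsc c f = (\<lambda>x. c * f x)"

definition fzero :: "'a \<Rightarrow> complex" where
  "fzero = (\<lambda>_. 0)"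

definition dual_space :: "('n::finite cvec \<Rightarrow> complex) set" where
  "dual_space = {f. clin f}"

definition dual_even :: "'n::finite cvec set \<Rightarrow> 'n cvec set \<Rightarrow> ('n cvec \<Rightarrow> complex) set" where
  "dual_even V0 V1 = {f \<in> dual_space. \<forall>v\<in>V1. f v = 0}"

definition dual_odd :: "'n::finite cvec set \<Rightarrow> 'n cvec set \<Rightarrow> ('n cvec \<Rightarrow> complex) set" where
  "dual_odd V0 V1 = {f \<in> dual_space. \<forall>v\<in>V0. f v = 0}"

definition dV_space :: "('n::finite cvec \<Rightarrow> complex) set" where
  "dV_space = {phi. antilin phi}"

definition dual_dV :: "(('n::finite cvec \<Rightarrow> complex) \<Rightarrow> complex) set" where
  "dual_dV = {L. (\<forall>phi\<in>dV_space. \<forall>psi\<in>dV_space. L (fadd phi psi) = L phi + L psi) \<and>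
                 (\<forall>c. \<forall>phi\<in>dV_space. L (fsc c phi) = c * L phi) \<and>
                 (\<forall>phi. phi \<notin> dV_space \<longrightarrow> L phi = 0)}"

definition d_dual :: "(('n::finite cvec \<Rightarrow> complex) \<Rightarrow> complex) set" where
  "d_dual = {T. (\<forall>f\<in>dual_space. \<forall>g\<in>dual_space. T (fadd f g) = T f + T g) \<and>
                (\<forall>c. \<forall>f\<in>dual_space. T (fsc c f) = cnj c * T f) \<and>
                (\<forall>f. f \<notin> dual_space \<longrightarrow> T f = 0)}"

definition hmap :: "('n::finite cvec \<Rightarrow> 'n cvec \<Rightarrow> complex) \<Rightarrow> 'n cvec \<Rightarrow> 'n cvec \<Rightarrow> complex" where
  "hmap B v = (\<lambda>w. B v w)"

definition hstar :: "('n::finite cvec \<Rightarrow> 'n cvec \<Rightarrow> complex) \<Rightarrow> (('n cvec \<Rightarrow> complex) \<Rightarrow> complex) \<Rightarrow> 'n cvec \<Rightarrow> complex" where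
  "hstar B L = (\<lambda>v. L (hmap B v))"

definition hstar_inv :: "('n::finite cvec \<Rightarrow> 'n cvec \<Rightarrow> complex) \<Rightarrow> ('n cvec \<Rightarrow> complex) \<Rightarrow> ('n cvec \<Rightarrow> complex) \<Rightarrow> complex" where
  "hstar_inv B f = (THE L. L \<in> dual_dV \<and> hstar B L = f)"

text \<open>d(V^*) is a dual of dV: its evaluation d(V^*) (x) dV -> 1 is obtained from
  coev_V : 1 -> V (x) V^*, by applying d and chi (giving dV (x) d(V^*) -> d(1) = 1)
  and precomposing with the Koszul braiding.  For an element bar g of dV
  (g in V^*, the antilinear representative being phi = conj o g) of parity q and
  an element bar alpha of d(V^*) of parity p, the composite d(coev_V) o chi gives
  sum_i (-1)^(|alpha||e_i|) conj(g(e_i) alpha(e^i)), i.e.  (-1)^(pq) Theta_p(g_q)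
  with Theta the representative of bar alpha; the braiding contributes (-1)^(qp).\<close>
definition dcoev_chi :: "'n::finite cvec set \<Rightarrow> 'n cvec set \<Rightarrow> nat \<Rightarrow> nat \<Rightarrow> ('n cvec \<Rightarrow> complex) \<Rightarrow> (('n cvec \<Rightarrow> complex) \<Rightarrow> complex) \<Rightarrow> complex" where
  "dcoev_chi V0 V1 q p phi T = koszul p q * T (\<lambda>v. cnj (phi (parproj V0 V1 q (parproj V0 V1 p v))))"

definition ev_ddual :: "'n::finite cvec set \<Rightarrow> 'n cvec set \<Rightarrow> (('n cvec \<Rightarrow> complex) \<Rightarrow> complex) \<Rightarrow> ('n cvec \<Rightarrow> complex) \<Rightarrow> complex" where
  "ev_ddual V0 V1 T phi = (\<Sum>p\<in>{0::nat,1}. \<Sum>q\<in>{0::nat,1}. koszul q p * dcoev_chi V0 V1 q p phi T)"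

text \<open>Canonical uniqueness-of-duals isomorphism (dV)^* -> d(V^*): the unique map
  intertwining the standard evaluation of (dV)^* with the evaluation of d(V^*).\<close>
definition psi_can :: "'n::finite cvec set \<Rightarrow> 'n cvec set \<Rightarrow> (('n cvec \<Rightarrow> complex) \<Rightarrow> complex) \<Rightarrow> ('n cvec \<Rightarrow> complex) \<Rightarrow> complex" where
  "psi_can V0 V1 L = (THE T. T \<in> d_dual \<and> (\<forall>phi\<in>dV_space. ev_ddual V0 V1 T phi = L phi))"

text \<open>The dual Hermitian pairing on V^*:  V^* --(h^*)^{-1}--> (dV)^* --psi--> d(V^*),
  read off as <f, f'> = (psi ((h^*)^{-1} f)) (bar f').\<close>
definition dual_form :: "'n::finite cvec set \<Rightarrow> 'n cvec set \<Rightarrow> ('n cvec \<Rightarrow> 'n cvec \<Rightarrow> complex) \<Rightarrow> ('n cvec \<Rightarrow> complex) \<Rightarrow> ('n cvec \<Rightarrow> complex) \<Rightarrow> complex" where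
  "dual_form V0 V1 B f f' = psi_can V0 V1 (hstar_inv B f) f'"

end

theory Submission
  imports Defs
begin

lemma lin_vec: "(\<And>x y. A (x+y) = A x + A y) \<Longrightarrow> (\<And>c x. A (c *s x) = c *s A x) \<Longrightarrow> Vector_Spaces.linear (*s) (*s) (A::complex^'n::finite \<Rightarrow> complex^'n)"
  by (simp add: Vector_Spaces.linear_def module_hom_iff vec.module_axioms vec.vector_space_axioms)

lemma antilin_sum:
  assumes "antilin (phi::'n::finite cvec \<Rightarrow> complex)" "finite S"
  shows "phi (\<Sum>i\<in>S. g i) = (\<Sum>i\<in>S. phi (g i))"
  using assms(2)
proof (induction S rule: finite_induct)
  case empty
  have "phi (0 + 0) = phi 0 + phi 0" using assms(1) unfolding antilin_def by blast
  then show ?case by simp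
next
  case (insert x F)
  then show ?case using assms(1) unfolding antilin_def by simp
qed

lemma antilin_expand:
  assumes "antilin (phi::'n::finite cvec \<Rightarrow> complex)"
  shows "phi w = (\<Sum>i\<in>UNIV. cnj (w$i) * phi (axis i 1))"
proof -
  have "phi w = phi (\<Sum>i\<in>UNIV. (w$i) *s axis i 1)" by (simp add: basis_expansion)
  also have "\<dots> = (\<Sum>i\<in>UNIV. phi ((w$i) *s axis i 1))" by (rule antilin_sum[OF assms]) simp
  also have "\<dots> = (\<Sum>i\<in>UNIV. cnj (w$i) * phi (axis i 1))"
    using assms unfolding antilin_def by simp
  finally show ?thesis .
qed

locale shv =
  fixes V0 V1 :: "'n::finite cvec set" and B :: "'n cvec \<Rightarrow> 'n cvec \<Rightarrow> complex"
  assumes H: "sHilbV V0 V1 B"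
begin

lemma facts:
  shows sub0: "is_subsp UNIV (+) (\<lambda>c x. c *s x) 0 V0"
  and sub1: "is_subsp UNIV (+) (\<lambda>c x. c *s x) 0 V1"
  and int01: "V0 \<inter> V1 = {0}"
  and dec: "\<And>x. \<exists>a\<in>V0. \<exists>b\<in>V1. x = a + b"
  and Badd1: "\<And>x y w. B (x + y) w = B x w + B y w"
  and Badd2: "\<And>x y w. B w (x + y) = B w x + B w y"
  and Bsc1: "\<And>c x w. B (c *s x) w = c * B x w"
  and Bsc2: "\<And>c x w. B w (c *s x) = cnj c * B w x"
  and orth: "\<And>x y. x \<in> V0 \<Longrightarrow> y \<in> V1 \<Longrightarrow> B x y = 0 \<and> B y x = 0"
  and herm0: "\<And>x y. x \<in> V0 \<Longrightarrow> y \<in> V0 \<Longrightarrow> B x y = cnj (B y x)"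
  and herm1: "\<And>x y. x \<in> V1 \<Longrightarrow> y \<in> V1 \<Longrightarrow> B x y = - cnj (B y x)"
  and nondeg: "\<And>x. (\<forall>y. B x y = 0) \<Longrightarrow> x = 0"
  and pos0: "\<And>v. v \<in> V0 \<Longrightarrow> v \<noteq> 0 \<Longrightarrow> pos_real (B v v)"
  and pos1: "\<And>v. v \<in> V1 \<Longrightarrow> v \<noteq> 0 \<Longrightarrow> pos_real (B v v / \<i>)"
proof -
  have S: "super_herm UNIV (+) (\<lambda>c x. c *s x) 0 V0 V1 B" and
    P: "(\<forall>v\<in>V0. v \<noteq> 0 \<longrightarrow> pos_real (B v v)) \<and> (\<forall>v\<in>V1. v \<noteq> 0 \<longrightarrow> pos_real (B v v / \<i>))"
    using H unfolding sHilbV_def sHilb_obj_def by auto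
  note S' = S[unfolded super_herm_def]
  show "is_subsp UNIV (+) (\<lambda>c x. c *s x) 0 V0" using S' by (elim conjE)
  show "is_subsp UNIV (+) (\<lambda>c x. c *s x) 0 V1" using S' by (elim conjE)
  show "V0 \<inter> V1 = {0}" using S' by (elim conjE)
  show "\<And>x. \<exists>a\<in>V0. \<exists>b\<in>V1. x = a + b" using S' by (elim conjE) blast
  show "\<And>x y w. B (x + y) w = B x w + B y w" using S' by (elim conjE) blast
  show "\<And>x y w. B w (x + y) = B w x + B w y" using S' by (elim conjE) blast
  show "\<And>c x w. B (c *s x) w = c * B x w" using S' by (elim conjE) blast
  show "\<And>c x w. B w (c *s x) = cnj c * B w x" using S' by (elim conjE) blast
  show "\<And>x y. x \<in> V0 \<Longrightarrow> y \<in> V1 \<Longrightarrow> B x y = 0 \<and> B y x = 0" using S' by (elim conjE) blast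
  show "\<And>x y. x \<in> V0 \<Longrightarrow> y \<in> V0 \<Longrightarrow> B x y = cnj (B y x)" using S' by (elim conjE) blast
  show "\<And>x y. x \<in> V1 \<Longrightarrow> y \<in> V1 \<Longrightarrow> B x y = - cnj (B y x)" using S' by (elim conjE) blast
  show "\<And>x. (\<forall>y. B x y = 0) \<Longrightarrow> x = 0" using S' by (elim conjE) blast
  show "\<And>v. v \<in> V0 \<Longrightarrow> v \<noteq> 0 \<Longrightarrow> pos_real (B v v)" using P by blast
  show "\<And>v. v \<in> V1 \<Longrightarrow> v \<noteq> 0 \<Longrightarrow> pos_real (B v v / \<i>)" using P by blast
qed

lemma sub0': "0 \<in> V0" "x \<in> V0 \<Longrightarrow> y \<in> V0 \<Longrightarrow> x + y \<in> V0" "x \<in> V0 \<Longrightarrow> c *s x \<in> V0"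
  using sub0 unfolding is_subsp_def by auto
lemma sub1': "0 \<in> V1" "x \<in> V1 \<Longrightarrow> y \<in> V1 \<Longrightarrow> x + y \<in> V1" "x \<in> V1 \<Longrightarrow> c *s x \<in> V1"
  using sub1 unfolding is_subsp_def by auto

lemma neg0: "x \<in> V0 \<Longrightarrow> - x \<in> V0"
proof -
  assume "x \<in> V0" hence "(-1) *s x \<in> V0" by (rule sub0'(3))
  moreover have "(-1) *s x = - x" by (simp add: vec_eq_iff)
  ultimately show ?thesis by simp
qed
lemma neg1: "x \<in> V1 \<Longrightarrow> - x \<in> V1"
proof -
  assume "x \<in> V1" hence "(-1) *s x \<in> V1" by (rule sub1'(3))
  moreover have "(-1) *s x = - x" by (simp add: vec_eq_iff)
  ultimately show ?thesis by simp
qed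
lemma diff0: "x \<in> V0 \<Longrightarrow> y \<in> V0 \<Longrightarrow> x - y \<in> V0"
proof -
  assume "x \<in> V0" "y \<in> V0"
  hence "x + - y \<in> V0" using neg0 sub0'(2) by blast
  thus ?thesis by simp
qed
lemma diff1: "x \<in> V1 \<Longrightarrow> y \<in> V1 \<Longrightarrow> x - y \<in> V1"
proof -
  assume "x \<in> V1" "y \<in> V1"
  hence "x + - y \<in> V1" using neg1 sub1'(2) by blast
  thus ?thesis by simp
qed

lemma B0l: "B 0 w = 0" using Bsc1[of 0 w] by simp
lemma B0r: "B w 0 = 0" using Bsc2[of w 0] by simp

lemma uniq0: assumes "a \<in> V0" "v - a \<in> V1" "a' \<in> V0" "v - a' \<in> V1" shows "a = a'"
proof -
  have 1: "a - a' \<in> V0" using assms(1,3) by (rule diff0)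
  have "(v - a') - (v - a) \<in> V1" using assms(4,2) by (rule diff1)
  moreover have "(v - a') - (v - a) = a - a'" by simp
  ultimately have "a - a' \<in> V1" by simp
  with 1 have "a - a' \<in> V0 \<inter> V1" by blast
  hence "a - a' = 0" using int01 by blast
  thus ?thesis by simp
qed

lemma uniq1: assumes "a \<in> V1" "v - a \<in> V0" "a' \<in> V1" "v - a' \<in> V0" shows "a = a'"
proof -
  have 1: "a - a' \<in> V1" using assms(1,3) by (rule diff1)
  have "(v - a') - (v - a) \<in> V0" using assms(4,2) by (rule diff0)
  moreover have "(v - a') - (v - a) = a - a'" by simp
  ultimately have "a - a' \<in> V0" by simp
  with 1 have "a - a' \<in> V0 \<inter> V1" by blast
  hence "a - a' = 0" using int01 by blast
  thus ?thesis by simp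
qed

abbreviation "p0 \<equiv> parproj V0 V1 0"
abbreviation "p1 \<equiv> parproj V0 V1 (Suc 0)"

lemma p0_char: assumes "a \<in> V0" "v - a \<in> V1" shows "p0 v = a"
proof -
  have "p0 v = (THE a. a \<in> V0 \<and> v - a \<in> V1)" by (simp add: parproj_def)
  also have "\<dots> = a"
    by (rule the_equality) (use assms uniq0 in blast)+
  finally show ?thesis .
qed
lemma p1_char: assumes "a \<in> V1" "v - a \<in> V0" shows "p1 v = a"
proof -
  have "p1 v = (THE b. b \<in> V1 \<and> v - b \<in> V0)" by (simp add: parproj_def)
  also have "\<dots> = a"
    by (rule the_equality) (use assms uniq1 in blast)+
  finally show ?thesis .
qed

lemma p0_mem: "p0 v \<in> V0 \<and> v - p0 v \<in> V1"
proof -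
  obtain a b where ab: "a \<in> V0" "b \<in> V1" "v = a + b" using dec by blast
  hence "v - a \<in> V1" by simp
  hence "p0 v = a" using ab(1) by (intro p0_char)
  then show ?thesis using ab by simp
qed
lemma p0m: "p0 v \<in> V0" using p0_mem by blast
lemma p0m': "v - p0 v \<in> V1" using p0_mem by blast
lemma p1_eq: "p1 v = v - p0 v"
  by (rule p1_char) (simp_all add: p0m p0m')
lemma p1_mem: "p1 v \<in> V1" by (simp add: p1_eq p0m')
lemma p01: "p0 v + p1 v = v" by (simp add: p1_eq)
lemma p0_V0: "x \<in> V0 \<Longrightarrow> p0 x = x" by (rule p0_char) (simp_all add: sub1'(1))
lemma p0_V1: "x \<in> V1 \<Longrightarrow> p0 x = 0" by (rule p0_char) (simp_all add: sub0'(1))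
lemma p1_V0: "x \<in> V0 \<Longrightarrow> p1 x = 0" by (simp add: p1_eq p0_V0)
lemma p1_V1: "x \<in> V1 \<Longrightarrow> p1 x = x" by (simp add: p1_eq p0_V1)
lemma p0_add: "p0 (x + y) = p0 x + p0 y"
proof (rule p0_char)
  show "p0 x + p0 y \<in> V0" using p0m sub0'(2) by blast
  have eq: "x + y - (p0 x + p0 y) = (x - p0 x) + (y - p0 y)" by simp
  have "(x - p0 x) + (y - p0 y) \<in> V1" using p0m' sub1'(2) by blast
  then show "x + y - (p0 x + p0 y) \<in> V1" unfolding eq .
qed
lemma p0_sc: "p0 (c *s x) = c *s p0 x"
proof (rule p0_char)
  show "c *s p0 x \<in> V0" using p0m sub0'(3) by blast
  have eq: "c *s x - c *s p0 x = c *s (x - p0 x)" by (simp add: vector_ssub_ldistrib)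
  have "c *s (x - p0 x) \<in> V1" using p0m' sub1'(3) by blast
  then show "c *s x - c *s p0 x \<in> V1" unfolding eq .
qed
lemma p1_add: "p1 (x + y) = p1 x + p1 y" by (simp add: p1_eq p0_add)
lemma p1_sc: "p1 (c *s x) = c *s p1 x" by (simp add: p1_eq p0_sc vector_ssub_ldistrib)

definition Amap :: "'n cvec \<Rightarrow> 'n cvec" where "Amap v = (\<chi> i. B v (axis i 1))"

lemma B_antilin: "antilin (B v)"
  unfolding antilin_def using Badd2 Bsc2 by blast

lemma B_inj: assumes "\<forall>w. B v w = B v' w" shows "v = v'"
proof -
  have "\<forall>w. B (v - v') w = 0"
  proof
    fix w
    have "B (v - v') w = B (v + (-1) *s v') w" by simp
    also have "\<dots> = B v w - B v' w" unfolding Badd1 Bsc1 by simp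
    finally show "B (v - v') w = 0" using assms by simp
  qed
  then show ?thesis using nondeg by fastforce
qed

lemma surjA: "surj Amap"
proof (rule vec.linear_inj_imp_surj)
  show "Vector_Spaces.linear (*s) (*s) Amap"
    by (rule lin_vec) (simp_all add: Amap_def Badd1 Bsc1 vec_eq_iff)
  show "inj Amap"
  proof (rule injI)
    fix x y assume "Amap x = Amap y"
    hence "\<forall>i. B x (axis i 1) = B y (axis i 1)" by (simp add: Amap_def vec_eq_iff)
    hence "\<forall>w. B x w = B y w" by (subst (1 2) antilin_expand[OF B_antilin]) simp
    then show "x = y" by (rule B_inj)
  qed
qed

lemma rep_ex: assumes "antilin phi" shows "\<exists>v. \<forall>w. B v w = phi w"
proof -
  obtain v where v: "Amap v = (\<chi> i. phi (axis i 1))" using surjA by (metis surjD)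
  hence "\<forall>i. B v (axis i 1) = phi (axis i 1)" by (simp add: Amap_def vec_eq_iff)
  hence "\<forall>w. B v w = phi w" by (subst antilin_expand[OF B_antilin], subst antilin_expand[OF assms]) simp
  then show ?thesis by blast
qed

definition vrep :: "('n cvec \<Rightarrow> complex) \<Rightarrow> 'n cvec" where
  "vrep phi = (THE v. \<forall>w. B v w = phi w)"

lemma vrep: assumes "antilin phi" shows "B (vrep phi) w = phi w"
proof -
  have "\<exists>!v. \<forall>w. B v w = phi w" using rep_ex[OF assms] B_inj by (metis (no_types, lifting))
  from theI'[OF this] show ?thesis unfolding vrep_def by blast
qed

lemma vrep_char: assumes "\<forall>w. B v w = phi w" shows "vrep phi = v"
proof -
  have "antilin phi" using B_antilin[of v] assms by (metis ext)
  then show ?thesis using vrep assms B_inj by metis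
qed

lemma vrep_h: "vrep (hmap B v) = v"
  by (rule vrep_char) (simp add: hmap_def)


lemma dV_iff: "phi \<in> dV_space \<longleftrightarrow> antilin phi" by (simp add: dV_space_def)
lemma ds_iff: "f \<in> dual_space \<longleftrightarrow> clin f" by (simp add: dual_space_def)

lemma hmap_eq: "hmap B v = B v" by (simp add: hmap_def)

lemma antilin_add: "antilin phi \<Longrightarrow> antilin psi \<Longrightarrow> antilin (fadd phi psi)"
  unfolding antilin_def fadd_def by (simp add: algebra_simps)
lemma antilin_sc: "antilin phi \<Longrightarrow> antilin (fsc c phi)"
  unfolding antilin_def fsc_def by (simp add: algebra_simps)
lemma clin_add: "clin phi \<Longrightarrow> clin psi \<Longrightarrow> clin (fadd phi psi)"
  unfolding clin_def fadd_def by (simp add: algebra_simps)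
lemma clin_sc: "clin phi \<Longrightarrow> clin (fsc c phi)"
  unfolding clin_def fsc_def by (simp add: algebra_simps)
lemma clin_zero: "clin fzero" unfolding clin_def fzero_def by simp
lemma clin_0: "clin f \<Longrightarrow> f 0 = 0"
proof -
  assume "clin f" hence "f (0 + 0) = f 0 + f 0" unfolding clin_def by blast
  thus ?thesis by simp
qed
lemma antilin_0: "antilin f \<Longrightarrow> f 0 = 0"
proof -
  assume "antilin f" hence "f (0 + 0) = f 0 + f 0" unfolding antilin_def by blast
  thus ?thesis by simp
qed
lemma clin_cnj: "clin f \<Longrightarrow> antilin (\<lambda>x. cnj (f x))"
  unfolding clin_def antilin_def by simp
lemma antilin_cnj: "antilin f \<Longrightarrow> clin (\<lambda>x. cnj (f x))"
  unfolding clin_def antilin_def by simp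

lemma vrep_add: "antilin phi \<Longrightarrow> antilin psi \<Longrightarrow> vrep (fadd phi psi) = vrep phi + vrep psi"
  by (rule vrep_char) (simp add: Badd1 vrep fadd_def)
lemma vrep_sc: "antilin phi \<Longrightarrow> vrep (fsc c phi) = c *s vrep phi"
  by (rule vrep_char) (simp add: Bsc1 vrep fsc_def)

definition L0 :: "('n cvec \<Rightarrow> complex) \<Rightarrow> ('n cvec \<Rightarrow> complex) \<Rightarrow> complex" where
  "L0 f = (\<lambda>phi. if phi \<in> dV_space then f (vrep phi) else 0)"

lemma L0_mem: assumes "clin f" shows "L0 f \<in> dual_dV"
  unfolding dual_dV_def
proof (intro CollectI conjI ballI allI impI)
  fix phi psi :: "'n cvec \<Rightarrow> complex" assume "phi \<in> dV_space" "psi \<in> dV_space"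
  then show "L0 f (fadd phi psi) = L0 f phi + L0 f psi"
    using assms by (simp add: L0_def dV_iff antilin_add vrep_add clin_def)
next
  fix c and phi :: "'n cvec \<Rightarrow> complex" assume "phi \<in> dV_space"
  then show "L0 f (fsc c phi) = c * L0 f phi"
    using assms by (simp add: L0_def dV_iff antilin_sc vrep_sc clin_def)
next
  fix phi :: "'n cvec \<Rightarrow> complex" assume "phi \<notin> dV_space"
  then show "L0 f phi = 0" by (simp add: L0_def)
qed

lemma hstar_L0: "hstar B (L0 f) = f"
  by (rule ext) (simp add: hstar_def L0_def hmap_eq dV_iff B_antilin vrep_h[unfolded hmap_eq])

lemma hstar_inv_eq: assumes "clin f" shows "hstar_inv B f = L0 f"
  unfolding hstar_inv_def
proof (rule the_equality)
  show "L0 f \<in> dual_dV \<and> hstar B (L0 f) = f" using L0_mem[OF assms] hstar_L0 by simp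
next
  fix L :: "('n cvec \<Rightarrow> complex) \<Rightarrow> complex" assume L: "L \<in> dual_dV \<and> hstar B L = f"
  show "L = L0 f"
  proof (rule ext)
    fix phi show "L phi = L0 f phi"
    proof (cases "phi \<in> dV_space")
      case True
      hence "B (vrep phi) = phi" using vrep dV_iff by blast
      hence "L phi = hstar B L (vrep phi)" by (simp add: hstar_def hmap_eq)
      then show ?thesis using L True by (simp add: L0_def)
    next
      case False
      then show ?thesis using L by (simp add: L0_def dual_dV_def)
    qed
  qed
qed

lemma Tzero: assumes "T \<in> d_dual" shows "T (\<lambda>v. 0) = 0"
proof -
  have "fzero \<in> dual_space" by (simp add: ds_iff clin_zero)
  hence 1: "T (fadd fzero fzero) = T fzero + T fzero" using assms unfolding d_dual_def by blast
  have 2: "fadd fzero fzero = fzero" by (simp add: fadd_def fzero_def)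
  from 1 have "T fzero = T fzero + T fzero" unfolding 2 .
  hence "T fzero = 0" by simp
  thus ?thesis by (simp add: fzero_def)
qed

lemma pp: "p0 (p0 v) = p0 v" "p1 (p0 v) = 0" "p0 (p1 v) = 0" "p1 (p1 v) = p1 v"
  by (simp_all add: p0_V0 p0m p1_V0 p0_V1 p1_mem p1_V1)

lemma ev_eq: assumes T: "T \<in> d_dual" and phi: "antilin phi"
  shows "ev_ddual V0 V1 T phi = T (\<lambda>v. cnj (phi v))"
proof -
  have g0: "(\<lambda>v. cnj (phi (p0 v))) \<in> dual_space"
    using phi unfolding ds_iff clin_def antilin_def by (simp add: p0_add p0_sc)
  have g1: "(\<lambda>v. cnj (phi (p1 v))) \<in> dual_space"
    using phi unfolding ds_iff clin_def antilin_def by (simp add: p1_add p1_sc)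
  have "T (fadd (\<lambda>v. cnj (phi (p0 v))) (\<lambda>v. cnj (phi (p1 v)))) = T (\<lambda>v. cnj (phi (p0 v))) + T (\<lambda>v. cnj (phi (p1 v)))"
    using T g0 g1 unfolding d_dual_def by blast
  moreover have "fadd (\<lambda>v. cnj (phi (p0 v))) (\<lambda>v. cnj (phi (p1 v))) = (\<lambda>v. cnj (phi v))"
  proof (rule ext)
    fix v
    have "phi v = phi (p0 v) + phi (p1 v)" using phi p01 unfolding antilin_def by metis
    then show "fadd (\<lambda>v. cnj (phi (p0 v))) (\<lambda>v. cnj (phi (p1 v))) v = cnj (phi v)"
      by (simp add: fadd_def p01)
  qed
  ultimately have *: "T (\<lambda>v. cnj (phi v)) = T (\<lambda>v. cnj (phi (p0 v))) + T (\<lambda>v. cnj (phi (p1 v)))" by simp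
  show ?thesis
    unfolding ev_ddual_def dcoev_chi_def koszul_def
    by (simp add: pp antilin_0[OF phi] Tzero[OF T] *)
qed

definition T0 :: "(('n cvec \<Rightarrow> complex) \<Rightarrow> complex) \<Rightarrow> ('n cvec \<Rightarrow> complex) \<Rightarrow> complex" where
  "T0 L = (\<lambda>g. if g \<in> dual_space then L (\<lambda>v. cnj (g v)) else 0)"

lemma T0_mem: assumes L: "L \<in> dual_dV" shows "T0 L \<in> d_dual"
  unfolding d_dual_def
proof (intro CollectI conjI ballI allI impI)
  fix f g :: "'n cvec \<Rightarrow> complex" assume fg: "f \<in> dual_space" "g \<in> dual_space"
  have "(\<lambda>v. cnj (fadd f g v)) = fadd (\<lambda>v. cnj (f v)) (\<lambda>v. cnj (g v))" by (simp add: fadd_def)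
  moreover have "(\<lambda>v. cnj (f v)) \<in> dV_space" "(\<lambda>v. cnj (g v)) \<in> dV_space"
    using fg clin_cnj by (auto simp: ds_iff dV_iff)
  ultimately have "L (\<lambda>v. cnj (fadd f g v)) = L (\<lambda>v. cnj (f v)) + L (\<lambda>v. cnj (g v))"
    using L unfolding dual_dV_def by simp
  then show "T0 L (fadd f g) = T0 L f + T0 L g"
    using fg by (simp add: T0_def ds_iff clin_add)
next
  fix c and f :: "'n cvec \<Rightarrow> complex" assume f: "f \<in> dual_space"
  have "(\<lambda>v. cnj (fsc c f v)) = fsc (cnj c) (\<lambda>v. cnj (f v))" by (simp add: fsc_def)
  moreover have "(\<lambda>v. cnj (f v)) \<in> dV_space"
    using f clin_cnj by (auto simp: ds_iff dV_iff)
  ultimately have "L (\<lambda>v. cnj (fsc c f v)) = cnj c * L (\<lambda>v. cnj (f v))"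
    using L unfolding dual_dV_def by simp
  then show "T0 L (fsc c f) = cnj c * T0 L f"
    using f by (simp add: T0_def ds_iff clin_sc)
next
  fix f :: "'n cvec \<Rightarrow> complex" assume "f \<notin> dual_space"
  then show "T0 L f = 0" by (simp add: T0_def)
qed

lemma psi_eq: assumes L: "L \<in> dual_dV" shows "psi_can V0 V1 L = T0 L"
  unfolding psi_can_def
proof (rule the_equality)
  show "T0 L \<in> d_dual \<and> (\<forall>phi\<in>dV_space. ev_ddual V0 V1 (T0 L) phi = L phi)"
  proof (intro conjI ballI)
    show "T0 L \<in> d_dual" by (rule T0_mem[OF L])
    fix phi :: "'n cvec \<Rightarrow> complex" assume "phi \<in> dV_space"
    hence a: "antilin phi" by (simp add: dV_iff)
    have "ev_ddual V0 V1 (T0 L) phi = T0 L (\<lambda>v. cnj (phi v))" by (rule ev_eq[OF T0_mem[OF L] a])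
    also have "\<dots> = L phi" by (simp add: T0_def ds_iff antilin_cnj[OF a])
    finally show "ev_ddual V0 V1 (T0 L) phi = L phi" .
  qed
next
  fix T :: "('n cvec \<Rightarrow> complex) \<Rightarrow> complex" assume T: "T \<in> d_dual \<and> (\<forall>phi\<in>dV_space. ev_ddual V0 V1 T phi = L phi)"
  show "T = T0 L"
  proof (rule ext)
    fix g show "T g = T0 L g"
    proof (cases "g \<in> dual_space")
      case True
      hence a: "antilin (\<lambda>v. cnj (g v))" by (simp add: ds_iff clin_cnj)
      hence "ev_ddual V0 V1 T (\<lambda>v. cnj (g v)) = L (\<lambda>v. cnj (g v))" using T by (simp add: dV_iff)
      then show ?thesis using ev_eq[OF conjunct1[OF T] a] True by (simp add: T0_def)
    next
      case False
      then show ?thesis using T by (simp add: T0_def d_dual_def)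
    qed
  qed
qed

definition W :: "('n cvec \<Rightarrow> complex) \<Rightarrow> 'n cvec" where
  "W f = vrep (\<lambda>x. cnj (f x))"

lemma DF: assumes "clin f" "clin f'" shows "dual_form V0 V1 B f f' = f (W f')"
proof -
  have "dual_form V0 V1 B f f' = T0 (L0 f) f'"
    unfolding dual_form_def hstar_inv_eq[OF assms(1)] psi_eq[OF L0_mem[OF assms(1)]] ..
  also have "\<dots> = f (W f')"
    using assms(2) by (simp add: T0_def L0_def ds_iff dV_iff clin_cnj W_def)
  finally show ?thesis .
qed


lemma BW: "clin f \<Longrightarrow> B (W f) x = cnj (f x)"
  unfolding W_def by (rule vrep[OF clin_cnj])
lemma fW: "clin f \<Longrightarrow> f x = cnj (B (W f) x)"
  using BW[of f x] by simp
lemma W_add: "clin f \<Longrightarrow> clin g \<Longrightarrow> W (fadd f g) = W f + W g"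
  unfolding W_def by (rule vrep_char) (simp add: Badd1 fadd_def vrep clin_cnj)
lemma W_sc: "clin f \<Longrightarrow> W (fsc c f) = cnj c *s W f"
  unfolding W_def by (rule vrep_char) (simp add: Bsc1 fsc_def vrep clin_cnj)
lemma W_surj: "\<exists>f. clin f \<and> W f = v"
proof (intro exI conjI)
  show c: "clin (\<lambda>x. cnj (B v x))" unfolding clin_def by (simp add: Badd2 Bsc2)
  show "W (\<lambda>x. cnj (B v x)) = v" unfolding W_def by (rule vrep_char) simp
qed

lemma W_even: assumes "f \<in> dual_even V0 V1" shows "W f \<in> V0"
proof -
  have f: "clin f" "\<And>v. v \<in> V1 \<Longrightarrow> f v = 0" using assms by (auto simp: dual_even_def ds_iff)
  let ?b = "p1 (W f)"
  have "\<forall>y. B ?b y = 0"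
  proof
    fix y
    have "B ?b (p0 y) = 0" using orth[OF p0m p1_mem] by blast
    moreover have "B (W f) (p1 y) = B (p0 (W f)) (p1 y) + B ?b (p1 y)"
      using Badd1 p01 by metis
    hence "B ?b (p1 y) = B (W f) (p1 y) - B (p0 (W f)) (p1 y)" by simp
    hence "B ?b (p1 y) = 0" using BW[OF f(1)] f(2)[OF p1_mem] orth[OF p0m p1_mem] by simp
    ultimately show "B ?b y = 0" using Badd2[of ?b "p0 y" "p1 y"] p01[of y] by simp
  qed
  hence "?b = 0" by (rule nondeg)
  hence "W f = p0 (W f)" using p01[of "W f"] by simp
  thus ?thesis using p0m by metis
qed

lemma W_odd: assumes "f \<in> dual_odd V0 V1" shows "W f \<in> V1"
proof -
  have f: "clin f" "\<And>v. v \<in> V0 \<Longrightarrow> f v = 0" using assms by (auto simp: dual_odd_def ds_iff)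
  let ?b = "p0 (W f)"
  have "\<forall>y. B ?b y = 0"
  proof
    fix y
    have "B ?b (p1 y) = 0" using orth[OF p0m p1_mem] by blast
    moreover have "B (W f) (p0 y) = B (p0 (W f)) (p0 y) + B (p1 (W f)) (p0 y)"
      using Badd1 p01 by metis
    hence "B ?b (p0 y) = B (W f) (p0 y) - B (p1 (W f)) (p0 y)" by simp
    hence "B ?b (p0 y) = 0" using BW[OF f(1)] f(2)[OF p0m] orth[OF p0m p1_mem] by simp
    ultimately show "B ?b y = 0" using Badd2[of ?b "p0 y" "p1 y"] p01[of y] by simp
  qed
  hence "?b = 0" by (rule nondeg)
  hence "W f = p1 (W f)" using p01[of "W f"] by simp
  thus ?thesis using p1_mem by metis
qed


lemma G_sub_even: "is_subsp dual_space fadd fsc fzero (dual_even V0 V1)"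
  unfolding is_subsp_def
proof (intro conjI ballI allI)
  show "dual_even V0 V1 \<subseteq> dual_space" by (auto simp: dual_even_def)
  show "fzero \<in> dual_even V0 V1" by (simp add: dual_even_def ds_iff clin_zero) (simp add: fzero_def)
  fix x y assume "x \<in> dual_even V0 V1" "y \<in> dual_even V0 V1"
  then show "fadd x y \<in> dual_even V0 V1" by (auto simp: dual_even_def ds_iff clin_add) (simp add: fadd_def)
next
  fix c x assume "x \<in> dual_even V0 V1"
  then show "fsc c x \<in> dual_even V0 V1" by (auto simp: dual_even_def ds_iff clin_sc) (simp add: fsc_def)
qed

lemma G_sub_odd: "is_subsp dual_space fadd fsc fzero (dual_odd V0 V1)"
  unfolding is_subsp_def
proof (intro conjI ballI allI)
  show "dual_odd V0 V1 \<subseteq> dual_space" by (auto simp: dual_odd_def)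
  show "fzero \<in> dual_odd V0 V1" by (simp add: dual_odd_def ds_iff clin_zero) (simp add: fzero_def)
  fix x y assume "x \<in> dual_odd V0 V1" "y \<in> dual_odd V0 V1"
  then show "fadd x y \<in> dual_odd V0 V1" by (auto simp: dual_odd_def ds_iff clin_add) (simp add: fadd_def)
next
  fix c x assume "x \<in> dual_odd V0 V1"
  then show "fsc c x \<in> dual_odd V0 V1" by (auto simp: dual_odd_def ds_iff clin_sc) (simp add: fsc_def)
qed

lemma G_int: "dual_even V0 V1 \<inter> dual_odd V0 V1 = {fzero}"
proof
  show "{fzero} \<subseteq> dual_even V0 V1 \<inter> dual_odd V0 V1" using G_sub_even G_sub_odd by (simp add: is_subsp_def)
  show "dual_even V0 V1 \<inter> dual_odd V0 V1 \<subseteq> {fzero}"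
  proof
    fix f assume f: "f \<in> dual_even V0 V1 \<inter> dual_odd V0 V1"
    hence c: "clin f" and k1: "\<And>v. v \<in> V1 \<Longrightarrow> f v = 0" and k0: "\<And>v. v \<in> V0 \<Longrightarrow> f v = 0"
      by (auto simp: dual_even_def dual_odd_def ds_iff)
    have "f = fzero"
    proof
      fix v
      have "f v = f (p0 v) + f (p1 v)" using c p01[of v] unfolding clin_def by metis
      then show "f v = fzero v" using k0[OF p0m] k1[OF p1_mem] by (simp add: fzero_def)
    qed
    then show "f \<in> {fzero}" by simp
  qed
qed

lemma G_dec: "\<forall>x\<in>dual_space. \<exists>a\<in>dual_even V0 V1. \<exists>b\<in>dual_odd V0 V1. x = fadd a b"
proof
  fix f :: "'n cvec \<Rightarrow> complex" assume "f \<in> dual_space"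
  hence c: "clin f" by (simp add: ds_iff)
  hence fa: "\<And>x y. f (x + y) = f x + f y" and fs: "\<And>c x. f (c *s x) = c * f x" by (auto simp: clin_def)
  have "clin (\<lambda>v. f (p0 v))" unfolding clin_def by (simp add: p0_add p0_sc fa fs)
  moreover have "\<forall>v\<in>V1. f (p0 v) = 0" by (simp add: p0_V1 clin_0[OF c])
  ultimately have a: "(\<lambda>v. f (p0 v)) \<in> dual_even V0 V1" by (simp add: dual_even_def ds_iff)
  have "clin (\<lambda>v. f (p1 v))" unfolding clin_def by (simp add: p1_add p1_sc fa fs)
  moreover have "\<forall>v\<in>V0. f (p1 v) = 0" by (simp add: p1_V0 clin_0[OF c])
  ultimately have b: "(\<lambda>v. f (p1 v)) \<in> dual_odd V0 V1" by (simp add: dual_odd_def ds_iff)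
  have "f = fadd (\<lambda>v. f (p0 v)) (\<lambda>v. f (p1 v))"
  proof
    fix v
    have "f v = f (p0 v + p1 v)" by (simp add: p01)
    also have "\<dots> = f (p0 v) + f (p1 v)" by (rule fa)
    finally show "f v = fadd (\<lambda>v. f (p0 v)) (\<lambda>v. f (p1 v)) v" by (simp add: fadd_def)
  qed
  then show "\<exists>a\<in>dual_even V0 V1. \<exists>b\<in>dual_odd V0 V1. f = fadd a b" using a b by blast
qed

abbreviation "DFm \<equiv> dual_form V0 V1 B"

lemma DF': "f \<in> dual_space \<Longrightarrow> f' \<in> dual_space \<Longrightarrow> DFm f f' = f (W f')"
  by (simp add: ds_iff DF)

lemma G_add: "\<forall>x\<in>dual_space. \<forall>y\<in>dual_space. \<forall>w\<in>dual_space.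
   DFm (fadd x y) w = DFm x w + DFm y w \<and> DFm w (fadd x y) = DFm w x + DFm w y"
proof (intro ballI conjI)
  fix x y w :: "'n cvec \<Rightarrow> complex" assume h: "x \<in> dual_space" "y \<in> dual_space" "w \<in> dual_space"
  have cx: "clin x" and cy: "clin y" and cw: "clin w" using h by (auto simp: ds_iff)
  have s: "fadd x y \<in> dual_space" using cx cy by (simp add: ds_iff clin_add)
  have "DFm (fadd x y) w = fadd x y (W w)" by (rule DF'[OF s h(3)])
  also have "\<dots> = x (W w) + y (W w)" by (simp add: fadd_def)
  finally show "DFm (fadd x y) w = DFm x w + DFm y w" using DF'[OF h(1) h(3)] DF'[OF h(2) h(3)] by simp
  have "DFm w (fadd x y) = w (W (fadd x y))" by (rule DF'[OF h(3) s])
  also have "\<dots> = w (W x + W y)" by (simp add: W_add[OF cx cy])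
  also have "\<dots> = w (W x) + w (W y)" using cw unfolding clin_def by blast
  finally show "DFm w (fadd x y) = DFm w x + DFm w y" using DF'[OF h(3) h(1)] DF'[OF h(3) h(2)] by simp
qed

lemma G_sc: "\<forall>c. \<forall>x\<in>dual_space. \<forall>w\<in>dual_space.
   DFm (fsc c x) w = c * DFm x w \<and> DFm w (fsc c x) = cnj c * DFm w x"
proof (intro allI ballI conjI)
  fix c and x w :: "'n cvec \<Rightarrow> complex" assume h: "x \<in> dual_space" "w \<in> dual_space"
  have cx: "clin x" and cw: "clin w" using h by (auto simp: ds_iff)
  have s: "fsc c x \<in> dual_space" using cx by (simp add: ds_iff clin_sc)
  have "DFm (fsc c x) w = fsc c x (W w)" by (rule DF'[OF s h(2)])
  also have "\<dots> = c * x (W w)" by (simp add: fsc_def)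
  finally show "DFm (fsc c x) w = c * DFm x w" using DF'[OF h(1) h(2)] by simp
  have "DFm w (fsc c x) = w (W (fsc c x))" by (rule DF'[OF h(2) s])
  also have "\<dots> = w (cnj c *s W x)" by (simp add: W_sc[OF cx])
  also have "\<dots> = cnj c * w (W x)" using cw unfolding clin_def by blast
  finally show "DFm w (fsc c x) = cnj c * DFm w x" using DF'[OF h(2) h(1)] by simp
qed

lemma even_ds: "x \<in> dual_even V0 V1 \<Longrightarrow> x \<in> dual_space" by (simp add: dual_even_def)
lemma odd_ds: "x \<in> dual_odd V0 V1 \<Longrightarrow> x \<in> dual_space" by (simp add: dual_odd_def)

lemma G_orth: "\<forall>x\<in>dual_even V0 V1. \<forall>y\<in>dual_odd V0 V1. DFm x y = 0 \<and> DFm y x = 0"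
proof (intro ballI conjI)
  fix x y assume x: "x \<in> dual_even V0 V1" and y: "y \<in> dual_odd V0 V1"
  have kx: "\<forall>v\<in>V1. x v = 0" using x by (simp add: dual_even_def)
  have ky: "\<forall>v\<in>V0. y v = 0" using y by (simp add: dual_odd_def)
  show "DFm x y = 0" using DF'[OF even_ds[OF x] odd_ds[OF y]] kx W_odd[OF y] by simp
  show "DFm y x = 0" using DF'[OF odd_ds[OF y] even_ds[OF x]] ky W_even[OF x] by simp
qed

lemma G_herm0: "\<forall>x\<in>dual_even V0 V1. \<forall>y\<in>dual_even V0 V1. DFm x y = cnj (DFm y x)"
proof (intro ballI)
  fix x y assume x: "x \<in> dual_even V0 V1" and y: "y \<in> dual_even V0 V1"
  have cx: "clin x" and cy: "clin y" using x y by (auto simp: dual_even_def ds_iff)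
  have "DFm x y = cnj (B (W x) (W y))" using DF'[OF even_ds[OF x] even_ds[OF y]] fW[OF cx] by simp
  also have "\<dots> = B (W y) (W x)" using herm0[OF W_even[OF x] W_even[OF y]] by simp
  also have "\<dots> = cnj (DFm y x)" using DF'[OF even_ds[OF y] even_ds[OF x]] fW[OF cy] by simp
  finally show "DFm x y = cnj (DFm y x)" .
qed

lemma G_herm1: "\<forall>x\<in>dual_odd V0 V1. \<forall>y\<in>dual_odd V0 V1. DFm x y = - cnj (DFm y x)"
proof (intro ballI)
  fix x y assume x: "x \<in> dual_odd V0 V1" and y: "y \<in> dual_odd V0 V1"
  have cx: "clin x" and cy: "clin y" using x y by (auto simp: dual_odd_def ds_iff)
  have "DFm x y = cnj (B (W x) (W y))" using DF'[OF odd_ds[OF x] odd_ds[OF y]] fW[OF cx] by simp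
  also have "\<dots> = - B (W y) (W x)" using herm1[OF W_odd[OF x] W_odd[OF y]] by simp
  also have "\<dots> = - cnj (DFm y x)" using DF'[OF odd_ds[OF y] odd_ds[OF x]] fW[OF cy] by simp
  finally show "DFm x y = - cnj (DFm y x)" .
qed

lemma G_nondeg: "\<forall>x\<in>dual_space. (\<forall>y\<in>dual_space. DFm x y = 0) \<longrightarrow> x = fzero"
proof (intro ballI impI)
  fix x :: "'n cvec \<Rightarrow> complex" assume x: "x \<in> dual_space" and h: "\<forall>y\<in>dual_space. DFm x y = 0"
  show "x = fzero"
  proof
    fix v
    obtain f where f: "clin f" "W f = v" using W_surj by blast
    have "DFm x f = 0" using h f by (simp add: ds_iff)
    then show "x v = fzero v" using x f by (simp add: DF' ds_iff fzero_def)
  qed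
qed

lemma W_nz: "clin f \<Longrightarrow> f \<noteq> fzero \<Longrightarrow> W f \<noteq> 0"
proof
  assume c: "clin f" and nz: "f \<noteq> fzero" and w: "W f = 0"
  have "f = fzero"
  proof
    fix x show "f x = fzero x" using fW[OF c, of x] w by (simp add: B0l fzero_def)
  qed
  with nz show False by simp
qed

lemma G_pos: "\<forall>v\<in>dual_even V0 V1. v \<noteq> fzero \<longrightarrow> pos_real (DFm v v)"
proof (intro ballI impI)
  fix v assume v: "v \<in> dual_even V0 V1" and nz: "v \<noteq> fzero"
  have c: "clin v" using v by (simp add: dual_even_def ds_iff)
  have p: "pos_real (B (W v) (W v))" using pos0[OF W_even[OF v] W_nz[OF c nz]] .
  have "DFm v v = cnj (B (W v) (W v))" using v by (simp add: DF' even_ds fW[OF c])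
  then show "pos_real (DFm v v)" using p by (auto simp: pos_real_def Reals_cnj_iff)
qed

lemma G_neg: "\<forall>v\<in>dual_odd V0 V1. v \<noteq> fzero \<longrightarrow> neg_real (DFm v v / \<i>)"
proof (intro ballI impI)
  fix v assume v: "v \<in> dual_odd V0 V1" and nz: "v \<noteq> fzero"
  have c: "clin v" using v by (simp add: dual_odd_def ds_iff)
  have p: "pos_real (B (W v) (W v) / \<i>)" using pos1[OF W_odd[OF v] W_nz[OF c nz]] .
  hence r0: "B (W v) (W v) / \<i> \<in> \<real>" "0 < Re (B (W v) (W v) / \<i>)" by (auto simp: pos_real_def)
  define r where "r = Re (B (W v) (W v) / \<i>)"
  have r: "B (W v) (W v) / \<i> = complex_of_real r" "r > 0"
  proof -
    show "B (W v) (W v) / \<i> = complex_of_real r" unfolding r_def by (rule of_real_Re[OF r0(1), symmetric])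
    show "r > 0" unfolding r_def by (rule r0(2))
  qed
  have "B (W v) (W v) = \<i> * (B (W v) (W v) / \<i>)" by simp
  also have "\<dots> = \<i> * complex_of_real r" by (simp only: r(1))
  finally have e: "B (W v) (W v) = \<i> * complex_of_real r" .
  have "DFm v v = cnj (B (W v) (W v))" using DF'[OF odd_ds[OF v] odd_ds[OF v]] fW[OF c] by simp
  also have "\<dots> = - \<i> * complex_of_real r" unfolding e by simp
  finally have "DFm v v / \<i> = - complex_of_real r" by simp
  then show "neg_real (DFm v v / \<i>)" using r by (simp add: neg_real_def)
qed

end

theorem mainTheorem17:
  fixes V0 V1 :: "'n::finite cvec set" and B :: "'n cvec \<Rightarrow> 'n cvec \<Rightarrow> complex"
  assumes "sHilbV V0 V1 B"
  shows "sHilb_oddneg_obj dual_space fadd fsc fzero (dual_even V0 V1) (dual_odd V0 V1) (dual_form V0 V1 B)"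
proof -
  interpret shv V0 V1 B by (unfold_locales) (rule assms)
  show ?thesis
    unfolding sHilb_oddneg_obj_def super_herm_def
    using G_sub_even G_sub_odd G_int G_dec G_add G_sc G_orth G_herm0 G_herm1 G_nondeg G_pos G_neg
    by (intro conjI) blast+
qed

end
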